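(* Let $\{(G_n,r_n),g_n^{n+1}\}$ be a g-cell structure in which every $G_n$ has the discrete topology, with inverse limit $G_\infty$, natural relation $r$ and quotient map $\pi:G_\infty\to G^\ast=G_\infty/r$. Suppose that for every $\bar x=(x_n)\in G_\infty$ and every open set $A\subset G_\infty$ with $B(\bar x,r)\subset A$ there exists $j\in\mathbb{N}$ such that $B(g_j^{-1}(x_j),r)\subset A$. Then the collection $$\{G^\ast\setminus\pi(G_\infty\setminus\mathcal V):\ \mathcal V \text{ open in } G_\infty\}$$ is a basis of open sets for the topology of $G^\ast$.
   Context: A cellular graph is a pair $(G,r)$ where $G$ is a nonempty topological space and $r\subset G\times G$ is a reflexive and symmetric relation. For $u\in G$, $B(u,r)=\{v\in G:(u,v)\in r\}$, and for $A\subset G$, $B(A,r)=\bigcup_{a\in A}B(a,r)$. An inverse sequence of cellular graphs $\{(G_n,r_n),g_n^{n+1}\}$ consists of cellular graphs $(G_n,r_n)$, $n\in\mathbb{N}$, and continuous maps $g_n^{n+1}:G_{n+1}\to G_n$ such that $(g_n^{n+1}(x),g_n^{n+1}(y))\in r_n$ whenever $(x,y)\in r_{n+1}$; $g_n^n=\mathrm{id}$, $g_n^l=g_n^{n+1}\circ\cdots\circ g_{l-1}^{l}$. Its inverse limit is $G_\infty=\{(x_n)\in\prod_n G_n: g_i^j(x_j)=x_i\ \forall j\ge i\}$ with the subspace of the product topology; $g_i:G_\infty\to G_i$ is the restricted $i$-th projection. The natural relation on $G_\infty$ is $r=\{(\bar x,\bar y):(x_n,y_n)\in r_n\ \forall n\}$.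 The sequence is a g-cell structure if $r$ is an equivalence relation; $G^\ast=G_\infty/r$ carries the quotient topology and $\pi$ is the quotient map. *)

theory Defs
  imports "HOL-Analysis.Analysis"
begin

text \<open>Level n: vertex set G n (with the discrete topology), relation R n,
  bonding map g n : G (n+1) \<rightarrow> G n.  Indices range over nat (starting at 0).\<close>

definition cellular_graph :: "'a set \<Rightarrow> ('a \<times> 'a) set \<Rightarrow> bool" where
  "cellular_graph V R \<longleftrightarrow> V \<noteq> {} \<and> R \<subseteq> V \<times> V \<and> refl_on V R \<and> sym R"

definition inverse_seq :: "(nat \<Rightarrow> 'a set) \<Rightarrow> (nat \<Rightarrow> ('a \<times> 'a) set) \<Rightarrow> (nat \<Rightarrow> 'a \<Rightarrow> 'a) \<Rightarrow> bool" where
  "inverse_seq G R g \<longleftrightarrow>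
     (\<forall>n. cellular_graph (G n) (R n)) \<and>
     (\<forall>n. g n \<in> G (Suc n) \<rightarrow> G n) \<and>
     (\<forall>n x y. (x, y) \<in> R (Suc n) \<longrightarrow> (g n x, g n y) \<in> R n)"

text \<open>Composite bonding maps g_i^j = g_i^{i+1} o ... o g_{j-1}^j (identity for j <= i).\<close>
fun bond :: "(nat \<Rightarrow> 'a \<Rightarrow> 'a) \<Rightarrow> nat \<Rightarrow> nat \<Rightarrow> 'a \<Rightarrow> 'a" where
  "bond g i 0 = id"
| "bond g i (Suc j) = (if Suc j \<le> i then id else bond g i j \<circ> g j)"

definition inv_limit :: "(nat \<Rightarrow> 'a set) \<Rightarrow> (nat \<Rightarrow> 'a \<Rightarrow> 'a) \<Rightarrow> (nat \<Rightarrow> 'a) set" where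
  "inv_limit G g = {x. (\<forall>n. x n \<in> G n) \<and> (\<forall>i j. i \<le> j \<longrightarrow> bond g i j (x j) = x i)}"

definition inv_limit_top :: "(nat \<Rightarrow> 'a set) \<Rightarrow> (nat \<Rightarrow> 'a \<Rightarrow> 'a) \<Rightarrow> (nat \<Rightarrow> 'a) topology" where
  "inv_limit_top G g = subtopology (product_topology (\<lambda>n. discrete_topology (G n)) UNIV) (inv_limit G g)"

definition nat_rel :: "(nat \<Rightarrow> 'a set) \<Rightarrow> (nat \<Rightarrow> ('a \<times> 'a) set) \<Rightarrow> (nat \<Rightarrow> 'a \<Rightarrow> 'a) \<Rightarrow> ((nat \<Rightarrow> 'a) \<times> (nat \<Rightarrow> 'a)) set" where
  "nat_rel G R g = {(x, y). x \<in> inv_limit G g \<and> y \<in> inv_limit G g \<and> (\<forall>n. (x n, y n) \<in> R n)}"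

definition g_cell :: "(nat \<Rightarrow> 'a set) \<Rightarrow> (nat \<Rightarrow> ('a \<times> 'a) set) \<Rightarrow> (nat \<Rightarrow> 'a \<Rightarrow> 'a) \<Rightarrow> bool" where
  "g_cell G R g \<longleftrightarrow> inverse_seq G R g \<and> equiv (inv_limit G g) (nat_rel G R g)"

definition Bset :: "'b set \<Rightarrow> ('b \<times> 'b) set \<Rightarrow> 'b set" where
  "Bset A r = {v. \<exists>a\<in>A. (a, v) \<in> r}"

definition qmap :: "('b \<times> 'b) set \<Rightarrow> 'b \<Rightarrow> 'b set" where
  "qmap r x = r `` {x}"

end

theory Submission
  imports Defs
begin

theorem mainTheorem3:
  fixes G :: "nat \<Rightarrow> 'a set" and R :: "nat \<Rightarrow> ('a \<times> 'a) set" and g :: "nat \<Rightarrow> 'a \<Rightarrow> 'a"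
    and Q :: "(nat \<Rightarrow> 'a) set topology"
  assumes gcell: "g_cell G R g"
    and quot: "quotient_map (inv_limit_top G g) Q (qmap (nat_rel G R g))"
    and cond: "\<And>x A. x \<in> inv_limit G g \<Longrightarrow> openin (inv_limit_top G g) A \<Longrightarrow>
                 Bset {x} (nat_rel G R g) \<subseteq> A \<Longrightarrow>
                 \<exists>j. Bset {y \<in> inv_limit G g. y j = x j} (nat_rel G R g) \<subseteq> A"
  shows "openin Q = arbitrary union_of (\<lambda>W. W \<in>
           {topspace Q - qmap (nat_rel G R g) ` (inv_limit G g - V) | V. openin (inv_limit_top G g) V})"
proof -
  define X where "X = inv_limit_top G g"
  define L where "L = inv_limit G g"
  define r where "r = nat_rel G R g"
  define \<pi> where "\<pi> = qmap r"
  have eq: "equiv L r" using gcell unfolding g_cell_def L_def r_def by blast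
  have LP: "L \<subseteq> (\<Pi>\<^sub>E n\<in>UNIV. G n)"
    unfolding L_def inv_limit_def by (auto simp: PiE_UNIV_domain)
  have topX: "topspace X = L"
    unfolding X_def inv_limit_top_def L_def[symmetric] topspace_subtopology topspace_product_topology
      topspace_discrete_topology using LP by blast
  have q: "\<pi> ` L = topspace Q"
    "\<And>U. U \<subseteq> topspace Q \<Longrightarrow> openin X {x \<in> L. \<pi> x \<in> U} \<longleftrightarrow> openin Q U"
    using quot unfolding quotient_map_def X_def[symmetric] \<pi>_def[symmetric] r_def[symmetric] topX
    by auto
  have rL: "r \<subseteq> L \<times> L" using eq by (simp add: equiv_def refl_on_def)
  have pieq: "\<And>y z. y \<in> L \<Longrightarrow> z \<in> L \<Longrightarrow> \<pi> z = \<pi> y \<longleftrightarrow> (y, z) \<in> r"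
    unfolding \<pi>_def qmap_def using eq by (metis equiv_class_eq_iff)
  have core: "\<And>y V. y \<in> L \<Longrightarrow> V \<subseteq> L \<Longrightarrow> (\<pi> y \<notin> \<pi> ` (L - V)) \<longleftrightarrow> r `` {y} \<subseteq> V"
  proof -
    fix y V assume y: "y \<in> L" and V: "V \<subseteq> L"
    show "(\<pi> y \<notin> \<pi> ` (L - V)) \<longleftrightarrow> r `` {y} \<subseteq> V"
    proof
      assume "\<pi> y \<notin> \<pi> ` (L - V)"
      then show "r `` {y} \<subseteq> V" using rL pieq y by blast
    next
      assume "r `` {y} \<subseteq> V"
      then show "\<pi> y \<notin> \<pi> ` (L - V)" using pieq y by blast
    qed
  qed
  have basic_open: "openin Q (topspace Q - \<pi> ` (L - V))" if V: "openin X V" for V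
  proof -
    have VL: "V \<subseteq> L" using openin_subset[OF V] topX by simp
    define K where "K = {y \<in> L. \<pi> y \<in> topspace Q - \<pi> ` (L - V)}"
    have K: "K = {y \<in> L. r `` {y} \<subseteq> V}"
      unfolding K_def using core[OF _ VL] q(1) by blast
    have "openin X K"
    proof (subst openin_subopen, intro ballI)
      fix y assume "y \<in> K"
      then have y: "y \<in> L" and sub: "r `` {y} \<subseteq> V" using K by auto
      have "Bset {y} r \<subseteq> V" using sub unfolding Bset_def by auto
      then obtain j where j: "Bset {z \<in> L. z j = y j} r \<subseteq> V"
        using cond[of y V] y V unfolding X_def[symmetric] L_def[symmetric] r_def[symmetric] by blast
      define T where "T = {z \<in> L. z j = y j}"
      have yj: "y j \<in> G j" using y unfolding L_def inv_limit_def by auto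
      have "openin (product_topology (\<lambda>n. discrete_topology (G n)) UNIV)
              {z \<in> topspace (product_topology (\<lambda>n. discrete_topology (G n)) UNIV). z j \<in> {y j}}"
        by (rule openin_continuous_map_preimage[OF continuous_map_product_projection])
           (use yj in auto)
      moreover have "T = {z \<in> topspace (product_topology (\<lambda>n. discrete_topology (G n)) UNIV). z j \<in> {y j}} \<inter> L"
        unfolding T_def topspace_product_topology topspace_discrete_topology using LP by blast
      ultimately have "openin X T"
        unfolding X_def inv_limit_top_def L_def[symmetric] openin_subtopology by blast
      moreover have "T \<subseteq> K"
        using j unfolding K T_def Bset_def by blast
      moreover have "y \<in> T" using y T_def by auto
      ultimately show "\<exists>T. openin X T \<and> y \<in> T \<and> T \<subseteq> K" by blast
    qed
    then show ?thesis using q(2)[of "topspace Q - \<pi> ` (L - V)"] K_def by auto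
  qed
  have self: "\<exists>V. openin X V \<and> W = topspace Q - \<pi> ` (L - V)" if W: "openin Q W" for W
  proof -
    have WQ: "W \<subseteq> topspace Q" using openin_subset[OF W] .
    define V where "V = {x \<in> L. \<pi> x \<in> W}"
    have "openin X V" using q(2)[OF WQ] W V_def by simp
    moreover have "W = topspace Q - \<pi> ` (L - V)"
    proof
      show "W \<subseteq> topspace Q - \<pi> ` (L - V)" using WQ V_def by auto
      show "topspace Q - \<pi> ` (L - V) \<subseteq> W"
      proof
        fix c assume c: "c \<in> topspace Q - \<pi> ` (L - V)"
        then obtain x where x: "x \<in> L" "c = \<pi> x" using q(1) by blast
        then have "x \<in> V" using c by blast
        then show "c \<in> W" using x V_def by simp
      qed
    qed
    ultimately show ?thesis by blast
  qed
  show ?thesis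
    unfolding X_def[symmetric] L_def[symmetric] r_def[symmetric] \<pi>_def[symmetric]
  proof (rule ext, rule iffI)
    fix W assume "openin Q W"
    then show "(arbitrary union_of (\<lambda>W. W \<in> {topspace Q - \<pi> ` (L - V) |V. openin X V})) W"
      using self by (intro arbitrary_union_of_inc) blast
  next
    fix W assume "(arbitrary union_of (\<lambda>W. W \<in> {topspace Q - \<pi> ` (L - V) |V. openin X V})) W"
    then obtain U where "U \<subseteq> {topspace Q - \<pi> ` (L - V) |V. openin X V}" "\<Union>U = W"
      unfolding union_of_def arbitrary_def by blast
    then have U: "U \<subseteq> {topspace Q - \<pi> ` (L - V) |V. openin X V}" and UW: "\<Union>U = W" by auto
    have "\<forall>S\<in>U. openin Q S"
    proof
      fix S assume "S \<in> U"
      then obtain V where "openin X V" "S = topspace Q - \<pi> ` (L - V)" using U by blast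
      then show "openin Q S" using basic_open by simp
    qed
    then show "openin Q W" using UW openin_Union by blast
  qed
qed

end
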